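(* Let $f_1,\dots,f_k:\mathbb{R}^n\to\mathbb{R}$ be continuously differentiable, and let $x\in\mathbb{R}^n$. Suppose vectors $\nabla\widetilde{f}_1(x),\dots,\nabla\widetilde{f}_k(x)\in\mathbb{R}^n$ satisfy $\|\nabla\widetilde{f}_i(x)-\nabla f_i(x)\|_2\le\epsilon_i$ for given $\epsilon_i\ge0$, and $\nabla\widetilde{f}_i(x)\neq0$ for $i=1,\dots,k$. Let $\widehat{\alpha}_1,\dots,\widehat{\alpha}_k\ge0$ with $\sum_{i=1}^k\widehat{\alpha}_i=1$, put $q_u(x)=-\sum_{j=1}^k\widehat{\alpha}_j\nabla\widetilde{f}_j(x)$, and assume $q_u(x)\neq0$. Then for each $i\in\{1,\dots,k\}$ the condition \[ \frac{q_u(x)\cdot\bigl(-\nabla\widetilde{f}_i(x)\bigr)}{\|q_u(x)\|_2\,\|\nabla\widetilde{f}_i(x)\|_2}\ \ge\ \frac{\epsilon_i}{\|\nabla\widetilde{f}_i(x)\|_2} \] is equivalent to \[ \widehat{\alpha}_i\ \ge\ \frac{1}{\|\nabla\widetilde{f}_i(x)\|_2^2}\Bigl(\|q_u(x)\|_2\,\epsilon_i-\sum_{j=1,\,j\neq i}^k\widehat{\alpha}_j\bigl(\nabla\widetilde{f}_j(x)\cdot\nabla\widetilde{f}_i(x)\bigr)\Bigr). \] In particular, if the latter inequality holds for all $i=1,\dots,k$, then $q_u(x)$ is a descent direction for all objectives, i.e. $-\nabla f_i(x)\cdot q_u(x)\ge0$ for $i=1,\dots,k$.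
   Context: Here $\nabla\widetilde{f}_i(x)$ are inexact approximations of the exact gradients $\nabla f_i(x)$ of the objectives of the multiobjective problem $\min_{x\in\mathbb{R}^n}(f_1(x),\dots,f_k(x))$. In the paper the first condition is phrased as $\gamma_i\ge\varphi_i$, where $\gamma_i=\frac{\pi}{2}-\arccos\bigl(\frac{q_u(x)\cdot(-\nabla\widetilde{f}_i(x))}{\|q_u(x)\|_2\|\nabla\widetilde{f}_i(x)\|_2}\bigr)$ is the angle between $q_u(x)$ and the hyperplane orthogonal to the $i$-th gradient, and $\varphi_i=\arcsin\bigl(\epsilon_i/\|\nabla\widetilde{f}_i(x)\|_2\bigr)$ is the worst-case angular deviation between exact and inexact gradient (when $\epsilon_i\le\|\nabla\widetilde f_i(x)\|_2$); $\gamma_i\ge\varphi_i$ is the same as the displayed cosine inequality. *)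

theory Defs
  imports "HOL-Analysis.Analysis"
begin

end

theory Submission
  imports Defs
begin

theorem lemma2:
  fixes k :: nat
    and f :: "nat \<Rightarrow> real ^ 'n \<Rightarrow> real"
    and grad :: "nat \<Rightarrow> real ^ 'n \<Rightarrow> real ^ 'n"
    and x :: "real ^ 'n"
    and gt :: "nat \<Rightarrow> real ^ 'n"
    and eps :: "nat \<Rightarrow> real"
    and alpha :: "nat \<Rightarrow> real"
    and q :: "real ^ 'n"
  assumes grad: "\<And>i y. i \<in> {1..k} \<Longrightarrow> (f i has_derivative (\<lambda>h. grad i y \<bullet> h)) (at y)"
    and grad_cont: "\<And>i. i \<in> {1..k} \<Longrightarrow> continuous_on UNIV (grad i)"
    and err: "\<And>i. i \<in> {1..k} \<Longrightarrow> norm (gt i - grad i x) \<le> eps i"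
    and eps_nonneg: "\<And>i. i \<in> {1..k} \<Longrightarrow> eps i \<ge> 0"
    and gt_nz: "\<And>i. i \<in> {1..k} \<Longrightarrow> gt i \<noteq> 0"
    and alpha_nonneg: "\<And>i. i \<in> {1..k} \<Longrightarrow> alpha i \<ge> 0"
    and alpha_sum: "(\<Sum>i=1..k. alpha i) = 1"
    and q_def: "q = - (\<Sum>j=1..k. alpha j *\<^sub>R gt j)"
    and q_nz: "q \<noteq> 0"
  shows "(\<forall>i\<in>{1..k}.
            (q \<bullet> (- gt i) / (norm q * norm (gt i)) \<ge> eps i / norm (gt i)
             \<longleftrightarrow>
             alpha i \<ge> (1 / (norm (gt i))\<^sup>2) *
               (norm q * eps i - (\<Sum>j\<in>{1..k} - {i}. alpha j * (gt j \<bullet> gt i)))))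
       \<and> ((\<forall>i\<in>{1..k}. alpha i \<ge> (1 / (norm (gt i))\<^sup>2) *
               (norm q * eps i - (\<Sum>j\<in>{1..k} - {i}. alpha j * (gt j \<bullet> gt i))))
           \<longrightarrow> (\<forall>i\<in>{1..k}. (- grad i x) \<bullet> q \<ge> 0))"
proof -
  define S where "S i = (\<Sum>j\<in>{1..k} - {i}. alpha j * (gt j \<bullet> gt i))" for i
  have key: "q \<bullet> (- gt i) = alpha i * (norm (gt i))\<^sup>2 + S i" if i: "i \<in> {1..k}" for i
  proof -
    have "q \<bullet> (- gt i) = (\<Sum>j=1..k. alpha j * (gt j \<bullet> gt i))"
      by (simp add: q_def inner_sum_left)
    also have "\<dots> = alpha i * (gt i \<bullet> gt i) + S i"
      unfolding S_def using i by (subst sum.remove[of _ i]) auto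
    finally show ?thesis by (simp add: power2_norm_eq_inner)
  qed
  have eqv: "(q \<bullet> (- gt i) / (norm q * norm (gt i)) \<ge> eps i / norm (gt i)
             \<longleftrightarrow> alpha i \<ge> (1 / (norm (gt i))\<^sup>2) * (norm q * eps i - S i))"
    and half: "(q \<bullet> (- gt i) / (norm q * norm (gt i)) \<ge> eps i / norm (gt i)
             \<longleftrightarrow> q \<bullet> (- gt i) \<ge> norm q * eps i)"
    if i: "i \<in> {1..k}" for i
  proof -
    have g: "norm (gt i) > 0" using gt_nz[OF i] by simp
    have qp: "norm q > 0" using q_nz by simp
    show h: "(q \<bullet> (- gt i) / (norm q * norm (gt i)) \<ge> eps i / norm (gt i)
             \<longleftrightarrow> q \<bullet> (- gt i) \<ge> norm q * eps i)"
      using g qp by (simp add: divide_simps mult.commute mult.left_commute)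
    have g2: "(norm (gt i))\<^sup>2 > 0" using g by simp
    have "alpha i \<ge> (1 / (norm (gt i))\<^sup>2) * (norm q * eps i - S i)
          \<longleftrightarrow> alpha i * (norm (gt i))\<^sup>2 \<ge> norm q * eps i - S i"
      using g2 by (simp add: divide_simps mult.commute)
    then show "(q \<bullet> (- gt i) / (norm q * norm (gt i)) \<ge> eps i / norm (gt i)
             \<longleftrightarrow> alpha i \<ge> (1 / (norm (gt i))\<^sup>2) * (norm q * eps i - S i))"
      using h key[OF i] by linarith
  qed
  show ?thesis
  proof (intro conjI ballI impI)
    fix i assume "i \<in> {1..k}" then show "(q \<bullet> (- gt i) / (norm q * norm (gt i)) \<ge> eps i / norm (gt i)
             \<longleftrightarrow>
             alpha i \<ge> (1 / (norm (gt i))\<^sup>2) *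
               (norm q * eps i - (\<Sum>j\<in>{1..k} - {i}. alpha j * (gt j \<bullet> gt i))))"
      using eqv S_def by simp
  next
    fix i assume A: "\<forall>i\<in>{1..k}. alpha i \<ge> (1 / (norm (gt i))\<^sup>2) *
               (norm q * eps i - (\<Sum>j\<in>{1..k} - {i}. alpha j * (gt j \<bullet> gt i)))"
      and i: "i \<in> {1..k}"
    have "q \<bullet> (- gt i) \<ge> norm q * eps i"
      using A i eqv[OF i] half[OF i] S_def by simp
    moreover have "\<bar>(gt i - grad i x) \<bullet> q\<bar> \<le> norm q * eps i"
    proof -
      have "\<bar>(gt i - grad i x) \<bullet> q\<bar> \<le> norm (gt i - grad i x) * norm q"
        by (rule Cauchy_Schwarz_ineq2)
      also have "\<dots> \<le> eps i * norm q" using err[OF i] by (simp add: mult_right_mono)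
      finally show ?thesis by (simp add: mult.commute)
    qed
    moreover have "(- grad i x) \<bullet> q = q \<bullet> (- gt i) + (gt i - grad i x) \<bullet> q"
      by (simp add: inner_diff_left inner_diff_right inner_commute)
    ultimately show "(- grad i x) \<bullet> q \<ge> 0" by linarith
  qed
qed

end
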